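(* Let $\Gamma$ be a one-dimensional CW-complex and $n \geq 1$ an integer. Let $\Delta$ be the graph whose vertices are the edges of $\Gamma$ and whose edges link two disjoint edges of $\Gamma$, and fix an orientation of the edges of $\Gamma$ so that oriented edges of $\Gamma$ are identified with $E(\Gamma)\sqcup E(\Gamma)^{-1}$. If $\phi$ denotes the map sending the oriented hyperplane $[e,S]$ of $UC_n(\Gamma)$ to the oriented edge $e$, then $(\Delta, \phi)$ is a special coloring of $UC_n(\Gamma)$.
   Context: $UC_n(\Gamma)$ is the cube complex whose vertices are $n$-element subsets of $\Gamma^{(0)}$, whose edges join $S_1,S_2$ when $S_1\triangle S_2$ is a pair of adjacent vertices, and where $n$ edges at a common vertex span an $n$-cube when their labelling one-cells of $\Gamma$ are pairwise disjoint. An oriented edge of $UC_n(\Gamma)$ is a pair $(e,S)$ ($e$ an oriented edge of $\Gamma$, $o(e)\in S$, $t(e)\notin S$), going from $S$ to $(S\setminus\{o(e)\})\cup\{t(e)\}$; $[e,S]$ denotes the oriented hyperplane dual to it (oriented hyperplanes are classes of oriented edges under the relation generated by being parallel sides of a square). For a cube complex $X$, a special coloring $(\Delta,\phi)$ is a graph $\Delta$ and a map $\phi$ from oriented hyperplanes of $X$ to $V(\Delta)\sqcup V(\Delta)^{-1}$ such that: $\phi(J^{-1})=\phi(J)^{-1}$ for every oriented hyperplane $J$; two transverse oriented hyperplanes have adjacent colors; no two oriented hyperplanes adjacent to a given vertex have the same color; two oriented edges with the same origin whose dual oriented hyperplanes have adjacent colors span a square. (Adjacency of colors $a^{\pm1},b^{\pm1}$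 means $a,b$ adjacent in $\Delta$.) *)

theory Defs
  imports Main
begin

text \<open>
A one-dimensional CW-complex \<Gamma> is encoded as a (multi)graph with possible loops:
a vertex set V, a set of one-cells E, and endpoint maps src, tgt (which also fix an
orientation of every one-cell).  An oriented edge of \<Gamma> is a pair (e, b) with e in E;
b = True means e with its fixed orientation, b = False means e inverse.
\<close>

type_synonym 'e oedge = "'e \<times> bool"

definition org :: "('e \<Rightarrow> 'v) \<Rightarrow> ('e \<Rightarrow> 'v) \<Rightarrow> 'e oedge \<Rightarrow> 'v" where
  "org src tgt a = (if snd a then src (fst a) else tgt (fst a))"

definition ter :: "('e \<Rightarrow> 'v) \<Rightarrow> ('e \<Rightarrow> 'v) \<Rightarrow> 'e oedge \<Rightarrow> 'v" where
  "ter src tgt a = (if snd a then tgt (fst a) else src (fst a))"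

definition oinv :: "'e oedge \<Rightarrow> 'e oedge" where
  "oinv a = (fst a, \<not> snd a)"

definition cells_disjoint :: "('e \<Rightarrow> 'v) \<Rightarrow> ('e \<Rightarrow> 'v) \<Rightarrow> 'e \<Rightarrow> 'e \<Rightarrow> bool" where
  "cells_disjoint src tgt e f \<longleftrightarrow> {src e, tgt e} \<inter> {src f, tgt f} = {}"

definition uc_vertex :: "'v set \<Rightarrow> nat \<Rightarrow> 'v set \<Rightarrow> bool" where
  "uc_vertex V n S \<longleftrightarrow> S \<subseteq> V \<and> finite S \<and> card S = n"

definition uc_oedge :: "'v set \<Rightarrow> 'e set \<Rightarrow> ('e \<Rightarrow> 'v) \<Rightarrow> ('e \<Rightarrow> 'v) \<Rightarrow> nat
    \<Rightarrow> 'e oedge \<times> 'v set \<Rightarrow> bool" where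
  "uc_oedge V E src tgt n x \<longleftrightarrow> fst (fst x) \<in> E \<and> uc_vertex V n (snd x)
     \<and> org src tgt (fst x) \<in> snd x \<and> ter src tgt (fst x) \<notin> snd x"

definition uc_target :: "('e \<Rightarrow> 'v) \<Rightarrow> ('e \<Rightarrow> 'v) \<Rightarrow> 'e oedge \<times> 'v set \<Rightarrow> 'v set" where
  "uc_target src tgt x = insert (ter src tgt (fst x)) (snd x - {org src tgt (fst x)})"

definition uc_inv :: "('e \<Rightarrow> 'v) \<Rightarrow> ('e \<Rightarrow> 'v) \<Rightarrow> 'e oedge \<times> 'v set \<Rightarrow> 'e oedge \<times> 'v set" where
  "uc_inv src tgt x = (oinv (fst x), uc_target src tgt x)"

definition spans_square :: "'v set \<Rightarrow> 'e set \<Rightarrow> ('e \<Rightarrow> 'v) \<Rightarrow> ('e \<Rightarrow> 'v) \<Rightarrow> nat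
    \<Rightarrow> 'e oedge \<times> 'v set \<Rightarrow> 'e oedge \<times> 'v set \<Rightarrow> bool" where
  "spans_square V E src tgt n x y \<longleftrightarrow> uc_oedge V E src tgt n x \<and> uc_oedge V E src tgt n y
     \<and> snd x = snd y \<and> cells_disjoint src tgt (fst (fst x)) (fst (fst y))"

text \<open>x and y are parallel (same orientation) sides of a square: the square spanned at S
by (a,S) and (b,S) has (a,S) and (a, S.b) as parallel sides.\<close>
definition square_parallel :: "'v set \<Rightarrow> 'e set \<Rightarrow> ('e \<Rightarrow> 'v) \<Rightarrow> ('e \<Rightarrow> 'v) \<Rightarrow> nat
    \<Rightarrow> 'e oedge \<times> 'v set \<Rightarrow> 'e oedge \<times> 'v set \<Rightarrow> bool" where
  "square_parallel V E src tgt n x y \<longleftrightarrow>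
     (\<exists>z. spans_square V E src tgt n x z \<and> y = (fst x, uc_target src tgt z))"

definition hyp_rel :: "'v set \<Rightarrow> 'e set \<Rightarrow> ('e \<Rightarrow> 'v) \<Rightarrow> ('e \<Rightarrow> 'v) \<Rightarrow> nat
    \<Rightarrow> 'e oedge \<times> 'v set \<Rightarrow> 'e oedge \<times> 'v set \<Rightarrow> bool" where
  "hyp_rel V E src tgt n = (\<lambda>x y. square_parallel V E src tgt n x y
                                  \<or> square_parallel V E src tgt n y x)\<^sup>*\<^sup>*"

definition hyp_class :: "'v set \<Rightarrow> 'e set \<Rightarrow> ('e \<Rightarrow> 'v) \<Rightarrow> ('e \<Rightarrow> 'v) \<Rightarrow> nat
    \<Rightarrow> 'e oedge \<times> 'v set \<Rightarrow> ('e oedge \<times> 'v set) set" where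
  "hyp_class V E src tgt n x = {y. hyp_rel V E src tgt n x y}"

definition oriented_hyperplanes :: "'v set \<Rightarrow> 'e set \<Rightarrow> ('e \<Rightarrow> 'v) \<Rightarrow> ('e \<Rightarrow> 'v) \<Rightarrow> nat
    \<Rightarrow> ('e oedge \<times> 'v set) set set" where
  "oriented_hyperplanes V E src tgt n =
     {hyp_class V E src tgt n x | x. uc_oedge V E src tgt n x}"

definition hyp_inv :: "('e \<Rightarrow> 'v) \<Rightarrow> ('e \<Rightarrow> 'v) \<Rightarrow> ('e oedge \<times> 'v set) set
    \<Rightarrow> ('e oedge \<times> 'v set) set" where
  "hyp_inv src tgt J = uc_inv src tgt ` J"

definition transverse :: "'v set \<Rightarrow> 'e set \<Rightarrow> ('e \<Rightarrow> 'v) \<Rightarrow> ('e \<Rightarrow> 'v) \<Rightarrow> nat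
    \<Rightarrow> ('e oedge \<times> 'v set) set \<Rightarrow> ('e oedge \<times> 'v set) set \<Rightarrow> bool" where
  "transverse V E src tgt n J K \<longleftrightarrow>
     (\<exists>x y. (x \<in> J \<or> x \<in> hyp_inv src tgt J) \<and> (y \<in> K \<or> y \<in> hyp_inv src tgt K)
            \<and> spans_square V E src tgt n x y)"

text \<open>Special coloring (\<Delta>, \<phi>) of UC_n(\<Gamma>); \<Delta> has vertex set DV and adjacency Dadj;
colours are V(\<Delta>) \<sqcup> V(\<Delta>)^{-1}, encoded as 'c \<times> bool (False = inverse).\<close>
definition special_coloring :: "'v set \<Rightarrow> 'e set \<Rightarrow> ('e \<Rightarrow> 'v) \<Rightarrow> ('e \<Rightarrow> 'v) \<Rightarrow> nat
    \<Rightarrow> 'c set \<Rightarrow> ('c \<Rightarrow> 'c \<Rightarrow> bool) \<Rightarrow> (('e oedge \<times> 'v set) set \<Rightarrow> 'c \<times> bool) \<Rightarrow> bool" where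
  "special_coloring V E src tgt n DV Dadj phi \<longleftrightarrow>
     (\<forall>J \<in> oriented_hyperplanes V E src tgt n. fst (phi J) \<in> DV)
   \<and> (\<forall>J \<in> oriented_hyperplanes V E src tgt n.
        phi (hyp_inv src tgt J) = (fst (phi J), \<not> snd (phi J)))
   \<and> (\<forall>J \<in> oriented_hyperplanes V E src tgt n. \<forall>K \<in> oriented_hyperplanes V E src tgt n.
        transverse V E src tgt n J K \<longrightarrow> Dadj (fst (phi J)) (fst (phi K)))
   \<and> (\<forall>x y. uc_oedge V E src tgt n x \<and> uc_oedge V E src tgt n y \<and> snd x = snd y
        \<and> hyp_class V E src tgt n x \<noteq> hyp_class V E src tgt n y
        \<longrightarrow> phi (hyp_class V E src tgt n x) \<noteq> phi (hyp_class V E src tgt n y))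
   \<and> (\<forall>x y. uc_oedge V E src tgt n x \<and> uc_oedge V E src tgt n y \<and> snd x = snd y
        \<and> Dadj (fst (phi (hyp_class V E src tgt n x))) (fst (phi (hyp_class V E src tgt n y)))
        \<longrightarrow> spans_square V E src tgt n x y)"

definition delta_adj :: "'e set \<Rightarrow> ('e \<Rightarrow> 'v) \<Rightarrow> ('e \<Rightarrow> 'v) \<Rightarrow> 'e \<Rightarrow> 'e \<Rightarrow> bool" where
  "delta_adj E src tgt e f \<longleftrightarrow> e \<in> E \<and> f \<in> E \<and> cells_disjoint src tgt e f"

end

theory Submission
  imports Defs
begin

lemma org_ter_cells: "{org src tgt a, ter src tgt a} = {src (fst a), tgt (fst a)}"
  by (auto simp: org_def ter_def)

lemma sp_fst: "square_parallel V E src tgt n x y \<Longrightarrow> fst y = fst x"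
  by (auto simp: square_parallel_def)

lemma oedge_target:
  assumes cw: "\<forall>e \<in> E. src e \<in> V \<and> tgt e \<in> V"
    and x: "uc_oedge V E src tgt n x" and z: "uc_oedge V E src tgt n z" and s: "snd x = snd z"
    and d: "cells_disjoint src tgt (fst (fst x)) (fst (fst z))"
  shows "uc_oedge V E src tgt n (fst x, uc_target src tgt z)"
proof -
  obtain a S where xa: "x = (a,S)" by (cases x)
  obtain b where zb: "z = (b,S)" using s xa by (cases z) auto
  have d': "{org src tgt a, ter src tgt a} \<inter> {org src tgt b, ter src tgt b} = {}"
    using d xa zb by (simp add: org_ter_cells cells_disjoint_def)
  have A: "fst a \<in> E" "S \<subseteq> V" "finite S" "card S = n" "org src tgt a \<in> S" "ter src tgt a \<notin> S"
    using x xa by (auto simp: uc_oedge_def uc_vertex_def)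
  have B: "fst b \<in> E" "org src tgt b \<in> S" "ter src tgt b \<notin> S"
    using z zb by (auto simp: uc_oedge_def uc_vertex_def)
  have tb: "ter src tgt b \<in> V" using cw B(1) by (auto simp: ter_def)
  have c: "card (insert (ter src tgt b) (S - {org src tgt b})) = n"
  proof -
    have "n \<ge> 1" using A by (metis card_0_eq empty_iff less_one not_le)
    then show ?thesis using A B by (simp add: card_Diff_singleton)
  qed
  show ?thesis using A B d' tb c xa zb
    by (auto simp: uc_oedge_def uc_vertex_def uc_target_def)
qed

lemma sp_oedge:
  assumes cw: "\<forall>e \<in> E. src e \<in> V \<and> tgt e \<in> V"
    and "square_parallel V E src tgt n x y"
  shows "uc_oedge V E src tgt n x \<and> uc_oedge V E src tgt n y"
proof -
  obtain z where z: "spans_square V E src tgt n x z" and y: "y = (fst x, uc_target src tgt z)"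
    using assms(2) by (auto simp: square_parallel_def)
  then show ?thesis using oedge_target[OF cw, of n x z] by (auto simp: spans_square_def)
qed

lemma hyp_rel_closed:
  assumes cw: "\<forall>e \<in> E. src e \<in> V \<and> tgt e \<in> V"
    and "hyp_rel V E src tgt n x y" and "uc_oedge V E src tgt n x"
  shows "uc_oedge V E src tgt n y \<and> fst y = fst x"
  using assms(2,3) unfolding hyp_rel_def
proof (induction rule: rtranclp_induct)
  case base then show ?case by simp
next
  case (step y z) then show ?case using sp_oedge[OF cw] sp_fst by metis
qed

lemma inv_inv:
  assumes "uc_oedge V E src tgt n x" shows "uc_inv src tgt (uc_inv src tgt x) = x"
  using assms by (cases x) (auto simp: uc_oedge_def uc_inv_def uc_target_def oinv_def org_def ter_def split: if_splits)

lemma inv_oedge: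
  assumes cw: "\<forall>e \<in> E. src e \<in> V \<and> tgt e \<in> V"
    and x: "uc_oedge V E src tgt n x" shows "uc_oedge V E src tgt n (uc_inv src tgt x)"
proof -
  obtain a S where xa: "x = (a,S)" by (cases x)
  have A: "fst a \<in> E" "S \<subseteq> V" "finite S" "card S = n" "org src tgt a \<in> S" "ter src tgt a \<notin> S"
    using x xa by (auto simp: uc_oedge_def uc_vertex_def)
  have tb: "ter src tgt a \<in> V" using cw A(1) by (auto simp: ter_def)
  have c: "card (insert (ter src tgt a) (S - {org src tgt a})) = n"
  proof -
    have "n \<ge> 1" using A by (metis card_0_eq empty_iff less_one not_le)
    then show ?thesis using A by (simp add: card_Diff_singleton)
  qed
  have oi: "org src tgt (oinv a) = ter src tgt a" "ter src tgt (oinv a) = org src tgt a" "fst (oinv a) = fst a"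
    by (auto simp: org_def ter_def oinv_def)
  show ?thesis using A tb c xa oi
    by (auto simp: uc_oedge_def uc_vertex_def uc_target_def uc_inv_def)
qed

lemma sp_inv:
  assumes cw: "\<forall>e \<in> E. src e \<in> V \<and> tgt e \<in> V"
    and sp: "square_parallel V E src tgt n x y"
  shows "square_parallel V E src tgt n (uc_inv src tgt x) (uc_inv src tgt y)"
proof -
  obtain z where z: "spans_square V E src tgt n x z" and y: "y = (fst x, uc_target src tgt z)"
    using sp by (auto simp: square_parallel_def)
  obtain a S where xa: "x = (a,S)" by (cases x)
  obtain b where zb: "z = (b,S)" using z xa by (cases z) (auto simp: spans_square_def)
  have d': "{org src tgt a, ter src tgt a} \<inter> {org src tgt b, ter src tgt b} = {}"
    using z xa zb by (simp add: org_ter_cells cells_disjoint_def spans_square_def)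
  have xo: "uc_oedge V E src tgt n x" and zo: "uc_oedge V E src tgt n z"
    using z by (auto simp: spans_square_def)
  have B: "fst b \<in> E" "org src tgt b \<in> S" "ter src tgt b \<notin> S"
    using zo zb by (auto simp: uc_oedge_def uc_vertex_def)
  have A: "org src tgt a \<in> S" "ter src tgt a \<notin> S"
    using xo xa by (auto simp: uc_oedge_def uc_vertex_def)
  define z' where "z' = (b, uc_target src tgt x)"
  have xi: "uc_oedge V E src tgt n (uc_inv src tgt x)" using inv_oedge[OF cw xo] .
  have zo': "uc_oedge V E src tgt n z'"
  proof -
    have "uc_oedge V E src tgt n (fst z, uc_target src tgt x)"
      using oedge_target[OF cw zo xo] z xa zb
      by (auto simp: spans_square_def cells_disjoint_def)
    then show ?thesis using zb z'_def by simp
  qed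
  have ss: "spans_square V E src tgt n (uc_inv src tgt x) z'"
    using xi zo' z xa zb z'_def
    by (auto simp: spans_square_def uc_inv_def oinv_def cells_disjoint_def)
  have "uc_inv src tgt y = (fst (uc_inv src tgt x), uc_target src tgt z')"
    using y xa zb z'_def A B d'
    by (auto simp: uc_inv_def uc_target_def)
  then show ?thesis using ss unfolding square_parallel_def by blast
qed

lemma hyp_rel_inv:
  assumes cw: "\<forall>e \<in> E. src e \<in> V \<and> tgt e \<in> V"
    and "hyp_rel V E src tgt n x y"
  shows "hyp_rel V E src tgt n (uc_inv src tgt x) (uc_inv src tgt y)"
  using assms(2) unfolding hyp_rel_def
proof (induction rule: rtranclp_induct)
  case base then show ?case by simp
next
  case (step y z)
  then show ?case using sp_inv[OF cw]
    by (metis (no_types, lifting) rtranclp.rtrancl_into_rtrancl)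
qed

lemma class_inv:
  assumes cw: "\<forall>e \<in> E. src e \<in> V \<and> tgt e \<in> V"
    and x: "uc_oedge V E src tgt n x"
  shows "hyp_inv src tgt (hyp_class V E src tgt n x) = hyp_class V E src tgt n (uc_inv src tgt x)"
proof
  show "hyp_inv src tgt (hyp_class V E src tgt n x) \<subseteq> hyp_class V E src tgt n (uc_inv src tgt x)"
  proof
    fix w assume "w \<in> hyp_inv src tgt (hyp_class V E src tgt n x)"
    then obtain v where "hyp_rel V E src tgt n x v" "w = uc_inv src tgt v"
      by (auto simp: hyp_inv_def hyp_class_def)
    then show "w \<in> hyp_class V E src tgt n (uc_inv src tgt x)"
      using hyp_rel_inv[OF cw] by (simp add: hyp_class_def)
  qed
next
  show "hyp_class V E src tgt n (uc_inv src tgt x) \<subseteq> hyp_inv src tgt (hyp_class V E src tgt n x)"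
  proof
    fix w assume "w \<in> hyp_class V E src tgt n (uc_inv src tgt x)"
    then have h: "hyp_rel V E src tgt n (uc_inv src tgt x) w" by (simp add: hyp_class_def)
    have wo: "uc_oedge V E src tgt n w"
      using hyp_rel_closed[OF cw h inv_oedge[OF cw x]] by simp
    have "hyp_rel V E src tgt n x (uc_inv src tgt w)"
      using hyp_rel_inv[OF cw h] inv_inv[OF x] by simp
    moreover have "w = uc_inv src tgt (uc_inv src tgt w)" using inv_inv[OF wo] by simp
    ultimately show "w \<in> hyp_inv src tgt (hyp_class V E src tgt n x)"
      by (auto simp: hyp_inv_def hyp_class_def)
  qed
qed

theorem proposition3p7:
  fixes V :: "'v set" and E :: "'e set" and src tgt :: "'e \<Rightarrow> 'v" and n :: nat
    and phi :: "('e oedge \<times> 'v set) set \<Rightarrow> 'e oedge"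
  assumes cw: "\<forall>e \<in> E. src e \<in> V \<and> tgt e \<in> V"
    and n: "n \<ge> 1"
    and phi: "\<forall>J \<in> oriented_hyperplanes V E src tgt n. \<forall>x \<in> J. phi J = fst x"
  shows "special_coloring V E src tgt n E (delta_adj E src tgt) phi"
proof -
  have self: "x \<in> hyp_class V E src tgt n x" for x by (simp add: hyp_class_def hyp_rel_def)
  have OH: "hyp_class V E src tgt n x \<in> oriented_hyperplanes V E src tgt n"
    if "uc_oedge V E src tgt n x" for x using that unfolding oriented_hyperplanes_def by blast
  have PC: "phi (hyp_class V E src tgt n x) = fst x" if "uc_oedge V E src tgt n x" for x
    using phi OH[OF that] self by blast
  have memJ: "\<exists>x. uc_oedge V E src tgt n x \<and> J = hyp_class V E src tgt n x"
    if "J \<in> oriented_hyperplanes V E src tgt n" for J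
    using that by (auto simp: oriented_hyperplanes_def)
  have C1: "\<forall>J \<in> oriented_hyperplanes V E src tgt n. fst (phi J) \<in> E"
  proof
    fix J assume "J \<in> oriented_hyperplanes V E src tgt n"
    then obtain x where x: "uc_oedge V E src tgt n x" "J = hyp_class V E src tgt n x" using memJ by blast
    then show "fst (phi J) \<in> E" using PC[OF x(1)] by (simp add: uc_oedge_def)
  qed
  have C2: "\<forall>J \<in> oriented_hyperplanes V E src tgt n.
        phi (hyp_inv src tgt J) = (fst (phi J), \<not> snd (phi J))"
  proof
    fix J assume "J \<in> oriented_hyperplanes V E src tgt n"
    then obtain x where x: "uc_oedge V E src tgt n x" "J = hyp_class V E src tgt n x" using memJ by blast
    have "phi (hyp_inv src tgt J) = fst (uc_inv src tgt x)"
      using class_inv[OF cw x(1)] PC[OF inv_oedge[OF cw x(1)]] x(2) by simp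
    then show "phi (hyp_inv src tgt J) = (fst (phi J), \<not> snd (phi J))"
      using PC[OF x(1)] x(2) by (simp add: uc_inv_def oinv_def)
  qed
  have lab: "fst (fst w) = fst (phi J)"
    if J: "J \<in> oriented_hyperplanes V E src tgt n" and w: "w \<in> J \<or> w \<in> hyp_inv src tgt J" for J w
  proof -
    obtain x where x: "uc_oedge V E src tgt n x" "J = hyp_class V E src tgt n x" using memJ J by blast
    have m: "fst v = fst x" if "v \<in> J" for v
      using hyp_rel_closed[OF cw _ x(1)] that x(2) by (auto simp: hyp_class_def)
    show ?thesis using w
    proof
      assume "w \<in> J" then show ?thesis using m PC[OF x(1)] x(2) by simp
    next
      assume "w \<in> hyp_inv src tgt J"
      then obtain v where "v \<in> J" "w = uc_inv src tgt v" by (auto simp: hyp_inv_def)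
      then show ?thesis using m PC[OF x(1)] x(2) by (simp add: uc_inv_def oinv_def)
    qed
  qed
  have C3: "\<forall>J \<in> oriented_hyperplanes V E src tgt n. \<forall>K \<in> oriented_hyperplanes V E src tgt n.
        transverse V E src tgt n J K \<longrightarrow> delta_adj E src tgt (fst (phi J)) (fst (phi K))"
  proof (intro ballI impI)
    fix J K assume J: "J \<in> oriented_hyperplanes V E src tgt n" and K: "K \<in> oriented_hyperplanes V E src tgt n"
      and "transverse V E src tgt n J K"
    then obtain x y where xy: "x \<in> J \<or> x \<in> hyp_inv src tgt J" "y \<in> K \<or> y \<in> hyp_inv src tgt K"
      "spans_square V E src tgt n x y" unfolding transverse_def by blast
    show "delta_adj E src tgt (fst (phi J)) (fst (phi K))"
      using lab[OF J xy(1)] lab[OF K xy(2)] xy(3)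
      by (auto simp: delta_adj_def spans_square_def uc_oedge_def)
  qed
  have C4: "\<forall>x y. uc_oedge V E src tgt n x \<and> uc_oedge V E src tgt n y \<and> snd x = snd y
        \<and> hyp_class V E src tgt n x \<noteq> hyp_class V E src tgt n y
        \<longrightarrow> phi (hyp_class V E src tgt n x) \<noteq> phi (hyp_class V E src tgt n y)"
    using PC by (metis prod.collapse)
  have C5: "\<forall>x y. uc_oedge V E src tgt n x \<and> uc_oedge V E src tgt n y \<and> snd x = snd y
        \<and> delta_adj E src tgt (fst (phi (hyp_class V E src tgt n x))) (fst (phi (hyp_class V E src tgt n y)))
        \<longrightarrow> spans_square V E src tgt n x y"
    using PC by (auto simp: delta_adj_def spans_square_def)
  show ?thesis unfolding special_coloring_def using C1 C2 C3 C4 C5 by blast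
qed

end
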